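(* Fix $C\neq1$ and fix $\epsilon\in(0,1)$, $\omega>0$ such that $\delta_0=\delta(C)-C\epsilon-\omega>0$ and $\delta_1=\delta(C)-2C\epsilon-\omega>0$. There is an integer $N$ such that: for all $n\ge N$, all $1\le i\ne j\le n$ and all integers $1\le r_1,r_2\le\epsilon n$, \[ \mathbb{P}\big(\{\#\mathcal{E}_i=r_1\}\cap\{\#\mathcal{E}_j=r_2\}\cap\{\mathcal{E}_i\neq\mathcal{E}_j\}\big)\le\frac1C\frac{T_{r_1}e^{-r_1}}{(r_1-1)!}e^{-\delta_1r_1}\cdot\frac1C\frac{T_{r_2}e^{-r_2}}{(r_2-1)!}e^{-\delta_1r_2}; \] and for all $n\ge N$, all $1\le i\ne j\le n$ and all integers $2\le r_1\le\epsilon n$, \[ \mathbb{P}\big(\{\#\mathcal{E}_i=r_1\}\cap\{\mathcal{E}_i=\mathcal{E}_j\}\big)\le2\epsilon\,\frac1C\frac{T_{r_1}e^{-r_1}}{(r_1-1)!}e^{-\delta_0r_1}. \]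
   Context: Let $C>0$ be a constant and $(\alpha_n)_{n\ge1}$ a sequence of nonnegative reals with $\alpha_n\to0$. For each $n$, consider the complete graph $K_n$ on vertex set $\{1,\dots,n\}$; each edge $e$ of $K_n$ is independently open with probability $p_n(e)$ and closed otherwise, where $\frac{C-\alpha_n}{n}\le p_n(e)\le\frac{C+\alpha_n}{n}$ for every edge $e$. Let $G$ be the resulting random graph of open edges, with probability measure $\mathbb{P}$. For a vertex $i$, $\mathcal{E}_i$ denotes the open component of $G$ containing $i$ (the set of vertices joined to $i$ by a path of open edges, together with $i$ itself), and $\#\mathcal{E}_i$ its number of vertices. $\delta(C)=C-1-\log C$. $T_1=1$ and for $r\ge2$, $T_r$ is the number of labelled trees on $r$ vertices. *)

theory Defs
  imports Complex_Main
begin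

definition Kedges :: "nat \<Rightarrow> nat set set" where
  "Kedges n = {{a, b} | a b. a \<in> {1..n} \<and> b \<in> {1..n} \<and> a \<noteq> b}"

definition config_prob :: "nat \<Rightarrow> (nat set \<Rightarrow> real) \<Rightarrow> nat set set \<Rightarrow> real" where
  "config_prob n p G = (\<Prod>e\<in>G. p e) * (\<Prod>e\<in>Kedges n - G. 1 - p e)"

definition Prob :: "nat \<Rightarrow> (nat set \<Rightarrow> real) \<Rightarrow> (nat set set \<Rightarrow> bool) \<Rightarrow> real" where
  "Prob n p P = (\<Sum>G\<in>{G. G \<subseteq> Kedges n \<and> P G}. config_prob n p G)"

definition comp :: "nat set set \<Rightarrow> nat \<Rightarrow> nat set" where
  "comp G i = ({(a, b). {a, b} \<in> G})\<^sup>* `` {i}"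

definition delta :: "real \<Rightarrow> real" where
  "delta C = C - 1 - ln C"

definition connected_on :: "nat \<Rightarrow> nat set set \<Rightarrow> bool" where
  "connected_on r F = (\<forall>a\<in>{1..r}. \<forall>b\<in>{1..r}. (a, b) \<in> ({(x, y). {x, y} \<in> F})\<^sup>*)"

definition is_tree :: "nat \<Rightarrow> nat set set \<Rightarrow> bool" where
  "is_tree r F = (F \<subseteq> Kedges r \<and> connected_on r F \<and>
                  (\<forall>e\<in>F. \<not> connected_on r (F - {e})))"

definition T :: "nat \<Rightarrow> nat" where
  "T r = (if r = 1 then 1 else card {F. is_tree r F})"

end

theory Submission
  imports Defs
begin

definition rel :: "nat set set \<Rightarrow> (nat \<times> nat) set" where
  "rel F = {(a, b). {a, b} \<in> F}"

definition EE :: "nat set \<Rightarrow> nat set set" where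
  "EE S = {{a, b} | a b. a \<in> S \<and> b \<in> S \<and> a \<noteq> b}"

definition cross :: "nat set \<Rightarrow> nat set \<Rightarrow> nat set set" where
  "cross S U = {{a, b} | a b. a \<in> S \<and> b \<in> U}"

definition conn :: "nat set \<Rightarrow> nat set set \<Rightarrow> bool" where
  "conn S F = (\<forall>a\<in>S. \<forall>b\<in>S. (a, b) \<in> (rel F)\<^sup>*)"

definition trees :: "nat set \<Rightarrow> nat set set set" where
  "trees S = {F. F \<subseteq> EE S \<and> conn S F \<and> (\<forall>e\<in>F. \<not> conn S (F - {e}))}"

lemma Kedges_EE: "Kedges n = EE {1..n}"
  unfolding Kedges_def EE_def by blast

lemma comp_rel: "comp G i = (rel G)\<^sup>* `` {i}"
  unfolding comp_def rel_def by simp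

lemma is_tree_trees: "is_tree r F \<longleftrightarrow> F \<in> trees {1..r}"
  unfolding is_tree_def trees_def connected_on_def conn_def rel_def Kedges_EE by simp

lemma sym_rel: "sym (rel F)"
  unfolding rel_def sym_def by (simp add: insert_commute)

lemma rtr_sym: "(a, b) \<in> (rel F)\<^sup>* \<Longrightarrow> (b, a) \<in> (rel F)\<^sup>*"
  by (metis sym_rel sym_rtrancl symD)

lemma rel_mono: "F \<subseteq> F' \<Longrightarrow> (rel F)\<^sup>* \<subseteq> (rel F')\<^sup>*"
  unfolding rel_def by (rule rtrancl_mono) blast

lemma finite_EE: "finite S \<Longrightarrow> finite (EE S)"
proof -
  assume "finite S"
  have "EE S \<subseteq> (\<lambda>(a,b). {a,b}) ` (S \<times> S)" unfolding EE_def by auto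
  thus ?thesis using \<open>finite S\<close> by (meson finite_SigmaI finite_imageI finite_subset)
qed

lemma card_cross:
  assumes "finite S" "finite U" "S \<inter> U = {}"
  shows "card (cross S U) = card S * card U"
proof -
  have eq: "cross S U = (\<lambda>(a,b). {a,b}) ` (S \<times> U)" unfolding cross_def by auto
  have "inj_on (\<lambda>(a,b). {a::nat,b}) (S \<times> U)"
  proof (rule inj_onI, clarify)
    fix a b a' b' assume h: "a \<in> S" "b \<in> U" "a' \<in> S" "b' \<in> U" "{a, b} = {a', b'}"
    thus "a = a' \<and> b = b'" using assms(3) by (metis disjoint_iff doubleton_eq_iff)
  qed
  thus ?thesis unfolding eq by (simp add: card_image card_cartesian_product)
qed

lemma finite_cross: "finite S \<Longrightarrow> finite U \<Longrightarrow> finite (cross S U)"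
proof -
  assume "finite S" "finite U"
  have "cross S U = (\<lambda>(a,b). {a,b}) ` (S \<times> U)" unfolding cross_def by auto
  thus ?thesis using \<open>finite S\<close> \<open>finite U\<close> by simp
qed

lemma config_nonneg:
  assumes "\<And>e. e \<in> Kedges n \<Longrightarrow> 0 \<le> p e \<and> p e \<le> 1"  "G \<subseteq> Kedges n"
  shows "0 \<le> config_prob n p G"
  unfolding config_prob_def using assms
  by (intro mult_nonneg_nonneg prod_nonneg) (auto simp: subset_iff)

lemma config_sum:
  assumes p01: "\<And>e. e \<in> Kedges n \<Longrightarrow> 0 \<le> p e \<and> p e \<le> 1"
    and AK: "A \<subseteq> Kedges n" and BK: "B \<subseteq> Kedges n" and AB: "A \<inter> B = {}"
  shows "Prob n p (\<lambda>G. A \<subseteq> G \<and> G \<inter> B = {}) = (\<Prod>e\<in>A. p e) * (\<Prod>e\<in>B. 1 - p e)"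
proof -
  define K where "K = Kedges n"
  have fK: "finite K" unfolding K_def Kedges_EE by (simp add: finite_EE)
  define f1 where "f1 e = (if e \<in> B then 0 else p e)" for e
  define f2 where "f2 e = (if e \<in> A then 0 else 1 - p e)" for e
  have "(\<Prod>e\<in>K. f1 e + f2 e) = (\<Sum>X\<in>Pow K. (\<Prod>x\<in>X. f1 x) * (\<Prod>x\<in>K-X. f2 x))"
    by (rule prod_add[OF fK])
  also have "\<dots> = (\<Sum>G\<in>{G. G \<subseteq> K \<and> A \<subseteq> G \<and> G \<inter> B = {}}. config_prob n p G)"
  proof (rule sum.mono_neutral_cong_right)
    show "finite (Pow K)" using fK by simp
    show "{G. G \<subseteq> K \<and> A \<subseteq> G \<and> G \<inter> B = {}} \<subseteq> Pow K" by auto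
    show "\<forall>X\<in>Pow K - {G. G \<subseteq> K \<and> A \<subseteq> G \<and> G \<inter> B = {}}.
            (\<Prod>x\<in>X. f1 x) * (\<Prod>x\<in>K-X. f2 x) = 0"
    proof
      fix X assume X: "X \<in> Pow K - {G. G \<subseteq> K \<and> A \<subseteq> G \<and> G \<inter> B = {}}"
      hence XK: "X \<subseteq> K" by auto
      show "(\<Prod>x\<in>X. f1 x) * (\<Prod>x\<in>K-X. f2 x) = 0"
      proof (cases "A \<subseteq> X")
        case True
        then obtain e where "e \<in> X" "e \<in> B" using X XK by auto
        hence "(\<Prod>x\<in>X. f1 x) = 0" using XK fK
          by (intro prod_zero) (auto simp: f1_def intro: finite_subset)
        thus ?thesis by simp
      next
        case False
        then obtain e where "e \<in> A" "e \<notin> X" by auto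
        hence "(\<Prod>x\<in>K-X. f2 x) = 0" using AK fK unfolding K_def
          by (intro prod_zero) (auto simp: f2_def K_def)
        thus ?thesis by simp
      qed
    qed
    show "(\<Prod>x\<in>X. f1 x) * (\<Prod>x\<in>K-X. f2 x) = config_prob n p X"
      if "X \<in> {G. G \<subseteq> K \<and> A \<subseteq> G \<and> G \<inter> B = {}}" for X
    proof -
      have "(\<Prod>x\<in>X. f1 x) = (\<Prod>x\<in>X. p x)" using that by (intro prod.cong) (auto simp: f1_def)
      moreover have "(\<Prod>x\<in>K-X. f2 x) = (\<Prod>x\<in>K-X. 1 - p x)" using that by (intro prod.cong) (auto simp: f2_def)
      ultimately show ?thesis unfolding config_prob_def K_def by simp
    qed
  qed
  finally have 1: "(\<Prod>e\<in>K. f1 e + f2 e) = Prob n p (\<lambda>G. A \<subseteq> G \<and> G \<inter> B = {})"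
    unfolding Prob_def K_def by simp
  have "(\<Prod>e\<in>K. f1 e + f2 e) = (\<Prod>e\<in>K. (if e \<in> A then p e else 1) * (if e \<in> B then 1 - p e else 1))"
    using AB by (intro prod.cong) (auto simp: f1_def f2_def)
  also have "\<dots> = (\<Prod>e\<in>K. (if e \<in> A then p e else 1)) * (\<Prod>e\<in>K. (if e \<in> B then 1 - p e else 1))"
    by (simp add: prod.distrib)
  also have "\<dots> = (\<Prod>e\<in>A. p e) * (\<Prod>e\<in>B. 1 - p e)"
    using AK BK fK unfolding K_def
    by (simp add: prod.If_cases Int_absorb1 Int_absorb2 flip: K_def)
  finally show ?thesis using 1 by simp
qed

lemma Prob_union_bound:
  assumes p01: "\<And>e. e \<in> Kedges n \<Longrightarrow> 0 \<le> p e \<and> p e \<le> 1"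
    and fI: "finite I"
    and cov: "\<And>G. G \<subseteq> Kedges n \<Longrightarrow> P G \<Longrightarrow> \<exists>k\<in>I. Q k G"
  shows "Prob n p P \<le> (\<Sum>k\<in>I. Prob n p (Q k))"
proof -
  define K where "K = Kedges n"
  have fK: "finite K" unfolding K_def Kedges_EE by (simp add: finite_EE)
  define c where "c = config_prob n p"
  have c0: "G \<subseteq> K \<Longrightarrow> 0 \<le> c G" for G unfolding c_def K_def using config_nonneg[of n p G] p01 by blast
  define X where "X = {G. G \<subseteq> K \<and> P G}"
  have fX: "finite X" unfolding X_def using fK by (simp add: finite_subset)
  have "Prob n p P = (\<Sum>G\<in>X. c G)" unfolding Prob_def X_def c_def K_def by simp
  also have "\<dots> \<le> (\<Sum>G\<in>X. \<Sum>k\<in>I. if Q k G then c G else 0)"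
  proof (rule sum_mono)
    fix G assume G: "G \<in> X"
    then obtain k where k: "k \<in> I" "Q k G" using cov unfolding X_def K_def by blast
    have "c G = (if Q k G then c G else 0)" using k by simp
    also have "\<dots> \<le> (\<Sum>k\<in>I. if Q k G then c G else 0)"
      by (rule member_le_sum) (use k fI G c0 X_def in auto)
    finally show "c G \<le> (\<Sum>k\<in>I. if Q k G then c G else 0)" .
  qed
  also have "\<dots> = (\<Sum>k\<in>I. \<Sum>G\<in>X. if Q k G then c G else 0)" by (rule sum.swap)
  also have "\<dots> \<le> (\<Sum>k\<in>I. Prob n p (Q k))"
  proof (rule sum_mono)
    fix k assume "k \<in> I"
    have "(\<Sum>G\<in>X. if Q k G then c G else 0) = (\<Sum>G\<in>X \<inter> {G. Q k G}. c G)"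
      using fX by (simp add: sum.inter_restrict)
    also have "\<dots> \<le> (\<Sum>G\<in>{G. G \<subseteq> K \<and> Q k G}. c G)"
      by (rule sum_mono2) (use fK c0 X_def in \<open>auto intro: finite_subset\<close>)
    finally show "(\<Sum>G\<in>X. if Q k G then c G else 0) \<le> Prob n p (Q k)"
      unfolding Prob_def c_def K_def by simp
  qed
  finally show ?thesis .
qed

lemma rtr_map:
  assumes "(a, b) \<in> R\<^sup>*" and "\<And>x y. (x, y) \<in> R \<Longrightarrow> (h x, h y) \<in> R'"
  shows "(h a, h b) \<in> R'\<^sup>*"
  using assms(1)
proof (induction rule: rtrancl_induct)
  case base then show ?case by simp
next
  case (step y z) then show ?case using assms(2) by (simp add: rtrancl_into_rtrancl)
qed

lemma EE_sub: "e \<in> EE S \<Longrightarrow> e \<subseteq> S"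
  unfolding EE_def by auto

lemma conn_mono: "conn S F \<Longrightarrow> F \<subseteq> F' \<Longrightarrow> conn S F'"
  unfolding conn_def using rel_mono by blast

lemma comp_facts:
  assumes GK: "G \<subseteq> Kedges n" and i: "i \<in> {1..n}"
  defines "S \<equiv> comp G i"
  shows "S \<subseteq> {1..n}" "i \<in> S" "G \<inter> cross S ({1..n} - S) = {}"
    "\<exists>F\<in>trees S. F \<subseteq> G"
proof -
  have Sdef: "S = (rel G)\<^sup>* `` {i}" unfolding S_def comp_rel ..
  have inV: "(i, y) \<in> (rel G)\<^sup>* \<Longrightarrow> y \<in> {1..n}" for y
  proof (induction rule: rtrancl_induct)
    case base then show ?case using i by simp
  next
    case (step y z)
    hence "{y, z} \<in> Kedges n" using GK unfolding rel_def by auto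
    hence "{y, z} \<subseteq> {1..n}" unfolding Kedges_EE by (rule EE_sub)
    then show ?case by simp
  qed
  show SV: "S \<subseteq> {1..n}"
  proof
    fix y assume "y \<in> S" thus "y \<in> {1..n}" unfolding Sdef using inV by simp
  qed
  show iS: "i \<in> S" unfolding Sdef by simp
  show "G \<inter> cross S ({1..n} - S) = {}"
  proof (rule ccontr)
    assume "G \<inter> cross S ({1..n} - S) \<noteq> {}"
    then obtain a b where ab: "{a,b} \<in> G" "a \<in> S" "b \<notin> S" unfolding cross_def by blast
    hence "(a, b) \<in> rel G" unfolding rel_def by simp
    moreover have "(i, a) \<in> (rel G)\<^sup>*" using ab(2) unfolding Sdef by simp
    ultimately have "(i, b) \<in> (rel G)\<^sup>*" by (rule rtrancl_into_rtrancl[rotated])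
    hence "b \<in> S" unfolding Sdef by simp
    thus False using ab by simp
  qed
  have finS: "finite S" using SV finite_subset by blast
  have key: "(i, y) \<in> (rel G)\<^sup>* \<Longrightarrow> (i, y) \<in> (rel (G \<inter> EE S))\<^sup>*" for y
  proof (induction rule: rtrancl_induct)
    case base then show ?case by simp
  next
    case (step y z)
    have yS: "y \<in> S" using step(1) unfolding Sdef by simp
    have "(i, z) \<in> (rel G)\<^sup>*" using step(1,2) by (rule rtrancl_into_rtrancl)
    hence zS: "z \<in> S" unfolding Sdef by simp
    show ?case
    proof (cases "y = z")
      case True then show ?thesis using step by simp
    next
      case False
      have "{y, z} \<in> EE S" unfolding EE_def using yS zS False by blast
      moreover have "{y, z} \<in> G" using step(2) unfolding rel_def by simp
      ultimately have "{y, z} \<in> G \<inter> EE S" by simp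
      hence "(y, z) \<in> rel (G \<inter> EE S)" unfolding rel_def by simp
      then show ?thesis using step(3) by (simp add: rtrancl_into_rtrancl)
    qed
  qed
  have conn0: "conn S (G \<inter> EE S)" unfolding conn_def
  proof (intro ballI)
    fix a b assume "a \<in> S" "b \<in> S"
    hence "(i, a) \<in> (rel (G \<inter> EE S))\<^sup>*" "(i, b) \<in> (rel (G \<inter> EE S))\<^sup>*" using key unfolding Sdef by auto
    thus "(a, b) \<in> (rel (G \<inter> EE S))\<^sup>*" by (rule rtrancl_trans[OF rtr_sym])
  qed
  define P where "P F \<longleftrightarrow> F \<subseteq> G \<inter> EE S \<and> conn S F" for F
  have "\<exists>F. P F \<and> (\<forall>y. P y \<longrightarrow> card F \<le> card y)"
    by (rule ex_has_least_nat[of P "G \<inter> EE S"]) (simp add: P_def conn0)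
  then obtain F where F0: "P F" and Fmin0: "\<forall>y. P y \<longrightarrow> card F \<le> card y" by blast
  have F: "F \<subseteq> G \<inter> EE S \<and> conn S F" using F0 unfolding P_def .
  have Fmin: "card F \<le> card F'" if "F' \<subseteq> G \<inter> EE S \<and> conn S F'" for F'
    using Fmin0 that unfolding P_def by blast
  have finF: "finite F" using F finite_EE[OF finS] finite_subset by blast
  have "F \<in> trees S" unfolding trees_def
  proof (intro CollectI conjI ballI)
    show "F \<subseteq> EE S" "conn S F" using F by auto
    fix e assume e: "e \<in> F"
    show "\<not> conn S (F - {e})"
    proof
      assume "conn S (F - {e})"
      moreover have "F - {e} \<subseteq> G \<inter> EE S" using F by blast
      ultimately have "card F \<le> card (F - {e})" using Fmin by blast
      moreover have "card (F - {e}) < card F" using e finF by (meson card_Diff1_less)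
      ultimately show False by simp
    qed
  qed
  thus "\<exists>F\<in>trees S. F \<subseteq> G" using F by blast
qed

lemma comp_disjoint:
  assumes "comp G i \<noteq> comp G j"
  shows "comp G i \<inter> comp G j = {}"
proof (rule ccontr)
  assume "comp G i \<inter> comp G j \<noteq> {}"
  then obtain x where "(i, x) \<in> (rel G)\<^sup>*" "(j, x) \<in> (rel G)\<^sup>*" unfolding comp_rel by auto
  hence ij: "(i, j) \<in> (rel G)\<^sup>*" by (rule rtrancl_trans[OF _ rtr_sym])
  have "comp G i = comp G j" unfolding comp_rel
  proof
    show "(rel G)\<^sup>* `` {i} \<subseteq> (rel G)\<^sup>* `` {j}"
    proof
      fix y assume "y \<in> (rel G)\<^sup>* `` {i}"
      hence "(i, y) \<in> (rel G)\<^sup>*" by simp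
      hence "(j, y) \<in> (rel G)\<^sup>*" using rtr_sym[OF ij] by (rule rtrancl_trans[rotated])
      thus "y \<in> (rel G)\<^sup>* `` {j}" by simp
    qed
    show "(rel G)\<^sup>* `` {j} \<subseteq> (rel G)\<^sup>* `` {i}"
    proof
      fix y assume "y \<in> (rel G)\<^sup>* `` {j}"
      hence "(j, y) \<in> (rel G)\<^sup>*" by simp
      hence "(i, y) \<in> (rel G)\<^sup>*" using ij by (rule rtrancl_trans[rotated])
      thus "y \<in> (rel G)\<^sup>* `` {i}" by simp
    qed
  qed
  thus False using assms by simp
qed

definition reach :: "nat set set \<Rightarrow> nat \<Rightarrow> nat set" where
  "reach F x = (rel F)\<^sup>* `` {x}"

lemma reach_self: "x \<in> reach F x" unfolding reach_def by simp

lemma reach_step: "y \<in> reach F w \<Longrightarrow> (y, z) \<in> rel F \<Longrightarrow> z \<in> reach F w"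
  unfolding reach_def by (simp add: rtrancl_into_rtrancl)

lemma reach_trans: "y \<in> reach F w \<Longrightarrow> reach F y \<subseteq> reach F w"
proof
  fix z assume "y \<in> reach F w" "z \<in> reach F y"
  hence "(w, y) \<in> (rel F)\<^sup>*" "(y, z) \<in> (rel F)\<^sup>*" unfolding reach_def by auto
  hence "(w, z) \<in> (rel F)\<^sup>*" by (rule rtrancl_trans)
  thus "z \<in> reach F w" unfolding reach_def by simp
qed

lemma reach_sym: "y \<in> reach F w \<Longrightarrow> w \<in> reach F y"
  unfolding reach_def using rtr_sym by simp

lemma reach_mono: "F \<subseteq> F' \<Longrightarrow> reach F w \<subseteq> reach F' w"
  unfolding reach_def using rel_mono by blast

lemma rel_insert: "rel (insert {u,v} F) = rel F \<union> {(u,v),(v,u)}"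
  unfolding rel_def by (auto simp: doubleton_eq_iff)

lemma reach_fin:
  assumes "finite F" "F \<subseteq> EE UNIV"
  shows "finite (reach F x)"
proof -
  have "reach F x \<subseteq> insert x (\<Union>F)"
  proof
    fix y assume "y \<in> reach F x"
    hence "(x, y) \<in> (rel F)\<^sup>*" unfolding reach_def by simp
    thus "y \<in> insert x (\<Union>F)"
    proof (cases rule: rtranclE)
      case (step w)
      hence "{w, y} \<in> F" unfolding rel_def by simp
      thus ?thesis by blast
    qed simp
  qed
  moreover have "finite (\<Union>F)"
  proof (rule finite_Union[OF assms(1)])
    fix e assume "e \<in> F"
    hence "e \<in> EE UNIV" using assms(2) by blast
    thus "finite e" unfolding EE_def by auto
  qed
  ultimately show ?thesis by (meson finite_insert finite_subset)
qed

lemma edge_count: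
  assumes "finite F" "F \<subseteq> EE UNIV"
  shows "card (reach F x) \<le> card {e\<in>F. e \<subseteq> reach F x} + 1"
  using assms
proof (induction F arbitrary: x rule: finite_induct)
  case empty
  have "rel {} = {}" unfolding rel_def by simp
  hence "reach {} x = {x}" unfolding reach_def by simp
  thus ?case by simp
next
  case (insert e F)
  from insert.prems obtain u v where e: "e = {u, v}" "u \<noteq> v" unfolding EE_def by blast
  have FE: "F \<subseteq> EE UNIV" using insert.prems by simp
  have IH: "card (reach F y) \<le> card {e\<in>F. e \<subseteq> reach F y} + 1" for y
    using insert.IH[OF FE] .
  have fin1: "finite (reach F y)" for y using reach_fin[OF insert.hyps(1) FE] .
  have fin2: "finite (reach (insert e F) y)" for y
    using reach_fin[of "insert e F"] insert.hyps(1) insert.prems by simp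
  have mono: "reach F y \<subseteq> reach (insert e F) y" for y by (rule reach_mono) blast
  let ?c' = "{e'\<in>insert e F. e' \<subseteq> reach (insert e F) x}"
  have fc': "finite ?c'" using insert.hyps(1) by simp
  have Inc: "reach (insert e F) x \<subseteq> reach F x \<union>
     (if u \<in> reach F x \<or> v \<in> reach F x then reach F u \<union> reach F v else {})"
  proof
    fix y assume "y \<in> reach (insert e F) x"
    hence "(x, y) \<in> (rel (insert e F))\<^sup>*" unfolding reach_def by simp
    thus "y \<in> reach F x \<union>
     (if u \<in> reach F x \<or> v \<in> reach F x then reach F u \<union> reach F v else {})"
    proof (induction rule: rtrancl_induct)
      case base then show ?case by (simp add: reach_self)
    next
      case (step y z)
      have "(y, z) \<in> rel F \<or> (y, z) = (u, v) \<or> (y, z) = (v, u)"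
        using step(2) unfolding e rel_insert by auto
      thus ?case
      proof (elim disjE)
        assume "(y, z) \<in> rel F"
        thus ?thesis using step(3) reach_step by (auto split: if_splits)
      next
        assume "(y, z) = (u, v)"
        thus ?thesis using step(3) reach_self by (auto split: if_splits)
      next
        assume "(y, z) = (v, u)"
        thus ?thesis using step(3) reach_self by (auto split: if_splits)
      qed
    qed
  qed
  have same: ?case if eq: "reach (insert e F) x = reach F x"
  proof -
    have "{e'\<in>F. e' \<subseteq> reach F x} \<subseteq> ?c'" using eq by auto
    hence "card {e'\<in>F. e' \<subseteq> reach F x} \<le> card ?c'" using fc' by (rule card_mono[rotated])
    thus ?thesis using IH[of x] eq by simp
  qed
  have merge: ?case if ab: "e = {a, b}" "a \<in> reach F x" "b \<notin> reach F x" for a b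
  proof -
    have ua: "reach F u \<union> reach F v = reach F a \<union> reach F b" using ab(1) e(1)
      by (auto simp: doubleton_eq_iff)
    have "reach F a \<subseteq> reach F x" using ab(2) by (rule reach_trans)
    hence sub: "reach (insert e F) x \<subseteq> reach F x \<union> reach F b"
      using Inc ab ua by (auto split: if_splits)
    have disj: "reach F x \<inter> reach F b = {}"
    proof (rule ccontr)
      assume "reach F x \<inter> reach F b \<noteq> {}"
      then obtain w where w: "w \<in> reach F x" "w \<in> reach F b" by blast
      have "b \<in> reach F w" using w(2) by (rule reach_sym)
      hence "b \<in> reach F x" using reach_trans[OF w(1)] by blast
      thus False using ab by simp
    qed
    have "card (reach (insert e F) x) \<le> card (reach F x \<union> reach F b)"
      using sub fin1 by (intro card_mono) auto
    also have "\<dots> = card (reach F x) + card (reach F b)"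
      using disj fin1 by (simp add: card_Un_disjoint)
    also have "\<dots> \<le> card {e\<in>F. e \<subseteq> reach F x} + card {e\<in>F. e \<subseteq> reach F b} + 2"
      using IH[of x] IH[of b] by simp
    also have "\<dots> = card (insert e ({e\<in>F. e \<subseteq> reach F x} \<union> {e\<in>F. e \<subseteq> reach F b})) + 1"
    proof -
      have d2: "{e\<in>F. e \<subseteq> reach F x} \<inter> {e\<in>F. e \<subseteq> reach F b} = {}"
      proof (rule ccontr)
        assume "{e\<in>F. e \<subseteq> reach F x} \<inter> {e\<in>F. e \<subseteq> reach F b} \<noteq> {}"
        then obtain e' where "e' \<in> F" "e' \<subseteq> reach F x" "e' \<subseteq> reach F b" by blast
        moreover have "e' \<noteq> {}" using \<open>e' \<in> F\<close> FE unfolding EE_def by blast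
        ultimately show False using disj by blast
      qed
      have "e \<notin> {e\<in>F. e \<subseteq> reach F x} \<union> {e\<in>F. e \<subseteq> reach F b}" using insert.hyps(2) by simp
      moreover have "finite ({e\<in>F. e \<subseteq> reach F x} \<union> {e\<in>F. e \<subseteq> reach F b})"
        using insert.hyps(1) by simp
      ultimately show ?thesis using d2 insert.hyps(1) by (simp add: card_Un_disjoint)
    qed
    also have "\<dots> \<le> card ?c' + 1"
    proof -
      have bx: "b \<in> reach (insert e F) x"
      proof -
        have "(a, b) \<in> rel (insert e F)" using ab(1) unfolding rel_def by simp
        moreover have "a \<in> reach (insert e F) x" using ab(2) mono by blast
        ultimately show ?thesis using reach_step by blast
      qed
      have "insert e ({e\<in>F. e \<subseteq> reach F x} \<union> {e\<in>F. e \<subseteq> reach F b}) \<subseteq> ?c'"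
      proof -
        have "e \<subseteq> reach (insert e F) x" using ab(1,2) bx mono by blast
        moreover have "reach F b \<subseteq> reach (insert e F) x"
          using mono[of b] reach_trans[OF bx] by blast
        ultimately show ?thesis using mono[of x] by blast
      qed
      thus ?thesis using fc' by (simp add: card_mono)
    qed
    finally show ?thesis .
  qed
  show ?case
  proof (cases "u \<in> reach F x"; cases "v \<in> reach F x")
    assume "u \<in> reach F x" "v \<in> reach F x"
    hence "reach F u \<subseteq> reach F x" "reach F v \<subseteq> reach F x" by (auto dest: reach_trans)
    hence "reach (insert e F) x = reach F x" using Inc mono[of x] \<open>u \<in> reach F x\<close> by auto
    thus ?case by (rule same)
  next
    assume "u \<in> reach F x" "v \<notin> reach F x"
    thus ?case using merge[of u v] e by simp
  next
    assume "u \<notin> reach F x" "v \<in> reach F x"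
    thus ?case using merge[of v u] e by (simp add: insert_commute)
  next
    assume "u \<notin> reach F x" "v \<notin> reach F x"
    hence "reach (insert e F) x = reach F x" using Inc mono[of x] by auto
    thus ?case by (rule same)
  qed
qed

lemma conn_card:
  assumes "finite S" "F \<subseteq> EE S" "conn S F" "x \<in> S"
  shows "card S \<le> card F + 1"
proof -
  have fF: "finite F" using assms(1,2) finite_EE finite_subset by blast
  have FE: "F \<subseteq> EE UNIV" using assms(2) unfolding EE_def by blast
  have "S \<subseteq> reach F x" using assms(3,4) unfolding conn_def reach_def by blast
  hence "card S \<le> card (reach F x)" using reach_fin[OF fF FE] by (rule card_mono[rotated])
  also have "\<dots> \<le> card {e\<in>F. e \<subseteq> reach F x} + 1" by (rule edge_count[OF fF FE])
  also have "\<dots> \<le> card F + 1" using fF by (simp add: card_mono)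
  finally show ?thesis .
qed

definition Fm :: "(nat \<Rightarrow> nat) \<Rightarrow> nat set set \<Rightarrow> nat set set" where
  "Fm h F = (\<lambda>e. h ` e) ` F"

lemma conn_map:
  assumes "conn S F" "h ` S = S'"
  shows "conn S' (Fm h F)"
  unfolding conn_def
proof (intro ballI)
  fix a' b' assume "a' \<in> S'" "b' \<in> S'"
  then obtain a b where ab: "a \<in> S" "b \<in> S" "a' = h a" "b' = h b" using assms(2) by blast
  have "(a, b) \<in> (rel F)\<^sup>*" using assms(1) ab unfolding conn_def by blast
  hence "(h a, h b) \<in> (rel (Fm h F))\<^sup>*"
  proof (rule rtr_map)
    fix x y assume "(x, y) \<in> rel F"
    hence "{x, y} \<in> F" unfolding rel_def by simp
    hence "h ` {x, y} \<in> Fm h F" unfolding Fm_def by blast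
    thus "(h x, h y) \<in> rel (Fm h F)" unfolding rel_def by simp
  qed
  thus "(a', b') \<in> (rel (Fm h F))\<^sup>*" using ab by simp
qed

lemma EE_map:
  assumes "F \<subseteq> EE S" "inj_on h S"
  shows "Fm h F \<subseteq> EE (h ` S)"
proof
  fix d assume "d \<in> Fm h F"
  then obtain e where "e \<in> F" "d = h ` e" unfolding Fm_def by blast
  then obtain a b where "a \<in> S" "b \<in> S" "a \<noteq> b" "e = {a, b}" using assms(1) unfolding EE_def by blast
  hence "d = {h a, h b}" "h a \<noteq> h b" "h a \<in> h ` S" "h b \<in> h ` S"
    using \<open>d = h ` e\<close> assms(2) by (auto simp: inj_on_def)
  thus "d \<in> EE (h ` S)" unfolding EE_def by blast
qed

lemma Fm_inv:
  assumes "F \<subseteq> EE S" "\<And>x. x \<in> S \<Longrightarrow> g (h x) = x"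
  shows "Fm g (Fm h F) = F"
proof -
  have "(\<lambda>e. g ` h ` e) e = e" if "e \<in> F" for e
  proof -
    have "e \<subseteq> S" using that assms(1) EE_sub by blast
    thus ?thesis using assms(2) by (force simp: image_image)
  qed
  thus ?thesis unfolding Fm_def image_image by simp
qed

lemma trees_card_le:
  assumes "finite S" "finite S'" "card S = card S'"
  shows "card (trees S) \<le> card (trees S')"
proof -
  obtain h where h: "bij_betw h S S'" using assms finite_same_card_bij by blast
  define g where "g = inv_into S h"
  have gh: "x \<in> S \<Longrightarrow> g (h x) = x" for x unfolding g_def using h by (simp add: bij_betw_def)
  have hg: "bij_betw g S' S" unfolding g_def using h by (rule bij_betw_inv_into)
  have hS: "h ` S = S'" "inj_on h S" using h by (auto simp: bij_betw_def)
  have gS: "g ` S' = S" "inj_on g S'" using hg by (auto simp: bij_betw_def)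
  have into: "Fm h ` trees S \<subseteq> trees S'"
  proof
    fix F' assume "F' \<in> Fm h ` trees S"
    then obtain F where F: "F \<in> trees S" "F' = Fm h F" by blast
    have FE: "F \<subseteq> EE S" and Fc: "conn S F" and Fmin: "\<And>e. e \<in> F \<Longrightarrow> \<not> conn S (F - {e})"
      using F(1) unfolding trees_def by auto
    have 1: "F' \<subseteq> EE S'" using EE_map[OF FE hS(2)] hS(1) F(2) by simp
    have 2: "conn S' F'" using conn_map[OF Fc hS(1)] F(2) by simp
    have 3: "\<not> conn S' (F' - {e'})" if e': "e' \<in> F'" for e'
    proof
      assume c: "conn S' (F' - {e'})"
      obtain e where e: "e \<in> F" "e' = h ` e" using e' F(2) unfolding Fm_def by blast
      have "conn S (Fm g (F' - {e'}))" using conn_map[OF c gS(1)] .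
      moreover have "Fm g (F' - {e'}) \<subseteq> F - {e}"
      proof
        fix d assume "d \<in> Fm g (F' - {e'})"
        then obtain d' where d': "d' \<in> F'" "d' \<noteq> e'" "d = g ` d'" unfolding Fm_def by blast
        then obtain f where f: "f \<in> F" "d' = h ` f" using F(2) unfolding Fm_def by blast
        have "f \<subseteq> S" using f(1) FE EE_sub by blast
        hence "g ` h ` f = f" using gh by (force simp: image_image)
        hence "d = f" using d' f by simp
        moreover have "f \<noteq> e" using d' f e by blast
        ultimately show "d \<in> F - {e}" using f by simp
      qed
      ultimately have "conn S (F - {e})" by (rule conn_mono)
      thus False using Fmin e by blast
    qed
    show "F' \<in> trees S'" unfolding trees_def using 1 2 3 by blast
  qed
  have inj: "inj_on (Fm h) (trees S)"
  proof (rule inj_on_inverseI)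
    fix F assume "F \<in> trees S"
    hence "F \<subseteq> EE S" unfolding trees_def by blast
    thus "Fm g (Fm h F) = F" using Fm_inv gh by blast
  qed
  have fin: "finite (trees S')"
  proof -
    have "trees S' \<subseteq> Pow (EE S')" unfolding trees_def by blast
    thus ?thesis using finite_EE[OF assms(2)] by (meson finite_Pow_iff finite_subset)
  qed
  have "card (trees S) = card (Fm h ` trees S)" using inj by (simp add: card_image)
  also have "\<dots> \<le> card (trees S')" using into fin by (rule card_mono[rotated])
  finally show ?thesis .
qed

lemma trees_card_T:
  assumes "finite S" "card S = r" "1 \<le> r"
  shows "card (trees S) \<le> T r"
proof (cases "r = 1")
  case True
  then obtain a where a: "S = {a}" using assms by (metis card_1_singletonE)
  have "EE S = {}" unfolding a EE_def by auto
  hence "trees S \<subseteq> {{}}" unfolding trees_def by auto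
  hence "card (trees S) \<le> card {{}::nat set set}" by (rule card_mono[rotated]) simp
  hence "card (trees S) \<le> 1" by simp
  thus ?thesis using True by (simp add: T_def)
next
  case False
  have "T r = card (trees {1..r})" using False unfolding T_def is_tree_trees by simp
  moreover have "card (trees S) \<le> card (trees {1..r})"
    using trees_card_le[OF assms(1), of "{1..r}"] assms by simp
  ultimately show ?thesis by simp
qed

lemma tree_edges:
  assumes "F \<in> trees S" "finite S" "S \<noteq> {}"
  shows "card S \<le> card F + 1"
proof -
  obtain x where "x \<in> S" using assms(3) by blast
  thus ?thesis using assms conn_card[of S F x] unfolding trees_def by blast
qed

lemma card_supsets:
  assumes "finite V" "X \<subseteq> V" "card X = m" "m \<le> r"
  shows "card {S. S \<subseteq> V \<and> X \<subseteq> S \<and> card S = r} = (card V - m) choose (r - m)"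
proof -
  have fX: "finite X" using assms(1,2) finite_subset by blast
  have eq: "{S. S \<subseteq> V \<and> X \<subseteq> S \<and> card S = r} = (\<lambda>T. T \<union> X) ` {T. T \<subseteq> V - X \<and> card T = r - m}"
  proof
    show "(\<lambda>T. T \<union> X) ` {T. T \<subseteq> V - X \<and> card T = r - m} \<subseteq> {S. S \<subseteq> V \<and> X \<subseteq> S \<and> card S = r}"
    proof
      fix S assume "S \<in> (\<lambda>T. T \<union> X) ` {T. T \<subseteq> V - X \<and> card T = r - m}"
      then obtain T where T: "T \<subseteq> V - X" "card T = r - m" "S = T \<union> X" by blast
      have "finite T" using T(1) assms(1) finite_subset by blast
      hence "card (T \<union> X) = card T + card X" using T(1) fX by (subst card_Un_disjoint) auto
      thus "S \<in> {S. S \<subseteq> V \<and> X \<subseteq> S \<and> card S = r}" using T assms by auto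
    qed
    show "{S. S \<subseteq> V \<and> X \<subseteq> S \<and> card S = r} \<subseteq> (\<lambda>T. T \<union> X) ` {T. T \<subseteq> V - X \<and> card T = r - m}"
    proof
      fix S assume "S \<in> {S. S \<subseteq> V \<and> X \<subseteq> S \<and> card S = r}"
      hence S: "S \<subseteq> V" "X \<subseteq> S" "card S = r" by auto
      have "finite S" using S(1) assms(1) finite_subset by blast
      hence "card (S - X) = r - m" using S assms(3) by (simp add: card_Diff_subset fX)
      moreover have "S = (S - X) \<union> X" using S(2) by blast
      ultimately show "S \<in> (\<lambda>T. T \<union> X) ` {T. T \<subseteq> V - X \<and> card T = r - m}"
        using S(1) by blast
    qed
  qed
  have inj: "inj_on (\<lambda>T. T \<union> X) {T. T \<subseteq> V - X \<and> card T = r - m}"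
    by (rule inj_onI) blast
  have "card {S. S \<subseteq> V \<and> X \<subseteq> S \<and> card S = r} = card {T. T \<subseteq> V - X \<and> card T = r - m}"
    unfolding eq using inj by (rule card_image)
  also have "\<dots> = card (V - X) choose (r - m)" using assms(1) by (simp add: n_subsets)
  also have "card (V - X) = card V - m" using assms fX by (simp add: card_Diff_subset)
  finally show ?thesis .
qed

lemma one_minus_le_exp: "1 - (x::real) \<le> exp (- x)"
  using exp_ge_add_one_self[of "-x"] by simp

lemma cross_sub_K:
  assumes "S \<subseteq> {1..n}" "U \<subseteq> {1..n}" "S \<inter> U = {}"
  shows "cross S U \<subseteq> Kedges n"
  unfolding cross_def Kedges_def using assms by blast

lemma EE_sub_K: "S \<subseteq> {1..n} \<Longrightarrow> EE S \<subseteq> Kedges n"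
  unfolding EE_def Kedges_def by blast

locale setting =
  fixes n :: nat and p :: "nat set \<Rightarrow> real" and lo hi :: real
  assumes p01: "\<And>e. e \<in> Kedges n \<Longrightarrow> 0 \<le> p e \<and> p e \<le> 1"
    and pb: "\<And>e. e \<in> Kedges n \<Longrightarrow> lo / real n \<le> p e \<and> p e \<le> hi / real n"
    and q01: "0 \<le> hi / real n" "hi / real n \<le> 1"
begin

lemma tree_prod:
  assumes "F \<in> trees S" "S \<subseteq> {1..n}" "card S = r" "1 \<le> r"
  shows "(\<Prod>e\<in>F. p e) \<le> (hi / real n) ^ (r - 1)"
proof -
  have FK: "F \<subseteq> Kedges n" using assms(1,2) EE_sub_K unfolding trees_def by blast
  have fS: "finite S" using assms(2) finite_subset by blast
  have "card S \<le> card F + 1" using tree_edges[OF assms(1) fS] assms(3,4) by fastforce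
  hence rF: "r - 1 \<le> card F" using assms(3) by simp
  have "(\<Prod>e\<in>F. p e) \<le> (\<Prod>e\<in>F. hi / real n)"
    by (rule prod_mono) (use FK p01 pb in blast)
  also have "\<dots> = (hi / real n) ^ card F" by simp
  also have "\<dots> \<le> (hi / real n) ^ (r - 1)" using rF q01 by (rule power_decreasing)
  finally show ?thesis .
qed

lemma cross_prod:
  assumes "B \<subseteq> Kedges n"
  shows "(\<Prod>e\<in>B. 1 - p e) \<le> exp (- (lo / real n) * real (card B))"
proof -
  have "(\<Prod>e\<in>B. 1 - p e) \<le> (\<Prod>e\<in>B. exp (- (lo / real n)))"
  proof (rule prod_mono)
    fix e assume "e \<in> B"
    hence "0 \<le> 1 - p e \<and> 1 - p e \<le> 1 - lo / real n" using assms p01 pb by force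
    thus "0 \<le> 1 - p e \<and> 1 - p e \<le> exp (- (lo / real n))" using one_minus_le_exp[of "lo / real n"] by linarith
  qed
  also have "\<dots> = exp (- (lo / real n) * real (card B))"
    by (simp add: exp_of_nat_mult[symmetric] mult.commute)
  finally show ?thesis .
qed

end

context setting begin

lemma finite_trees: "finite S \<Longrightarrow> finite (trees S)"
proof -
  assume "finite S"
  have "trees S \<subseteq> Pow (EE S)" unfolding trees_def by blast
  thus ?thesis using finite_EE[OF \<open>finite S\<close>] by (meson finite_Pow_iff finite_subset)
qed

lemma term_single:
  assumes "S \<subseteq> {1..n}" "card S = r" "1 \<le> r" "F \<in> trees S"
  shows "Prob n p (\<lambda>G. F \<subseteq> G \<and> G \<inter> cross S ({1..n} - S) = {})
     \<le> (hi / real n) ^ (r - 1) * exp (- (lo / real n) * real (r * (n - r)))"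
proof -
  have FE: "F \<subseteq> EE S" using assms(4) unfolding trees_def by blast
  have FK: "F \<subseteq> Kedges n" using FE EE_sub_K[OF assms(1)] by blast
  have BK: "cross S ({1..n} - S) \<subseteq> Kedges n" using assms(1) by (intro cross_sub_K) auto
  have disj: "F \<inter> cross S ({1..n} - S) = {}"
  proof (rule ccontr)
    assume "F \<inter> cross S ({1..n} - S) \<noteq> {}"
    then obtain e where "e \<in> F" "e \<in> cross S ({1..n} - S)" by blast
    then obtain a b where "e = {a, b}" "b \<notin> S" "e \<subseteq> S" using FE EE_sub unfolding cross_def by blast
    thus False by blast
  qed
  have fS: "finite S" using assms(1) finite_subset by blast
  have cc: "card (cross S ({1..n} - S)) = r * (n - r)"
    using card_cross[OF fS, of "{1..n} - S"] assms(1,2) by (simp add: card_Diff_subset fS)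
  have "Prob n p (\<lambda>G. F \<subseteq> G \<and> G \<inter> cross S ({1..n} - S) = {})
      = (\<Prod>e\<in>F. p e) * (\<Prod>e\<in>cross S ({1..n} - S). 1 - p e)"
    by (rule config_sum[OF p01 FK BK disj])
  also have "\<dots> \<le> (hi / real n) ^ (r - 1) * exp (- (lo / real n) * real (r * (n - r)))"
  proof (rule mult_mono)
    show "(\<Prod>e\<in>F. p e) \<le> (hi / real n) ^ (r - 1)" using tree_prod[OF assms(4,1,2,3)] .
    show "(\<Prod>e\<in>cross S ({1..n} - S). 1 - p e) \<le> exp (- (lo / real n) * real (r * (n - r)))"
      using cross_prod[OF BK] cc by simp
    show "0 \<le> (hi / real n) ^ (r - 1)" using q01 by simp
    show "0 \<le> (\<Prod>e\<in>cross S ({1..n} - S). 1 - p e)" using BK p01 by (intro prod_nonneg) force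
  qed
  finally show ?thesis .
qed

lemma prob_single:
  assumes i: "i \<in> {1..n}" and r: "1 \<le> r"
    and Pimp: "\<And>G. G \<subseteq> Kedges n \<Longrightarrow> P G \<Longrightarrow> card (comp G i) = r \<and> j \<in> comp G i"
  shows "Prob n p P \<le> real (card {S. S \<subseteq> {1..n} \<and> {i, j} \<subseteq> S \<and> card S = r}) * real (T r)
     * ((hi / real n) ^ (r - 1) * exp (- (lo / real n) * real (r * (n - r))))"
proof -
  define Ss where "Ss = {S. S \<subseteq> {1..n} \<and> {i, j} \<subseteq> S \<and> card S = r}"
  define I where "I = Sigma Ss trees"
  define M where "M = (hi / real n) ^ (r - 1) * exp (- (lo / real n) * real (r * (n - r)))"
  have M0: "0 \<le> M" unfolding M_def using q01 by simp
  have "Ss \<subseteq> Pow {1..n}" unfolding Ss_def by blast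
  hence fSs: "finite Ss" by (rule finite_subset) simp
  have fS: "S \<in> Ss \<Longrightarrow> finite S" for S unfolding Ss_def by (auto intro: finite_subset[OF _ finite_atLeastAtMost])
  have fI: "finite I" unfolding I_def using fSs fS finite_trees by (intro finite_SigmaI) blast+
  define Q where "Q = (\<lambda>(S, F) G. F \<subseteq> G \<and> G \<inter> cross S ({1..n} - S) = {})"
  have "Prob n p P \<le> (\<Sum>k\<in>I. Prob n p (Q k))"
  proof (rule Prob_union_bound[OF p01 fI])
    fix G assume G: "G \<subseteq> Kedges n" "P G"
    define S where "S = comp G i"
    obtain F where F: "F \<in> trees S" "F \<subseteq> G" using comp_facts(4)[OF G(1) i] unfolding S_def by blast
    have "S \<in> Ss" unfolding Ss_def S_def using comp_facts(1,2)[OF G(1) i] Pimp[OF G] by auto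
    hence "(S, F) \<in> I" unfolding I_def using F by simp
    moreover have "Q (S, F) G" unfolding Q_def using F comp_facts(3)[OF G(1) i] unfolding S_def by simp
    ultimately show "\<exists>k\<in>I. Q k G" by blast
  qed
  also have "\<dots> \<le> (\<Sum>k\<in>I. M)"
  proof (rule sum_mono)
    fix k assume "k \<in> I"
    then obtain S F where k: "k = (S, F)" "S \<in> Ss" "F \<in> trees S" unfolding I_def by blast
    have "S \<subseteq> {1..n}" "card S = r" using k(2) unfolding Ss_def by auto
    hence "Prob n p (\<lambda>G. F \<subseteq> G \<and> G \<inter> cross S ({1..n} - S) = {}) \<le> M"
      unfolding M_def using k(3) r by (intro term_single) auto
    thus "Prob n p (Q k) \<le> M" unfolding k(1) Q_def by simp
  qed
  also have "\<dots> = real (card I) * M" by simp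
  also have "\<dots> \<le> real (card Ss) * real (T r) * M"
  proof -
    have "card I = (\<Sum>S\<in>Ss. card (trees S))" unfolding I_def
      by (rule card_SigmaI[OF fSs]) (use finite_trees fS in blast)
    also have "\<dots> \<le> (\<Sum>S\<in>Ss. T r)"
    proof (rule sum_mono)
      fix S assume "S \<in> Ss"
      hence "finite S" "card S = r" using fS[of S] unfolding Ss_def by auto
      thus "card (trees S) \<le> T r" using r by (rule trees_card_T)
    qed
    also have "\<dots> = card Ss * T r" by simp
    finally have "real (card I) \<le> real (card Ss * T r)" by (simp only: of_nat_le_iff)
    hence "real (card I) \<le> real (card Ss) * real (T r)" by simp
    thus ?thesis using M0 by (intro mult_right_mono)
  qed
  finally show ?thesis unfolding Ss_def M_def .
qed

end

lemma finite_trees': "finite S \<Longrightarrow> finite (trees S)"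
proof -
  assume "finite S"
  have "trees S \<subseteq> Pow (EE S)" unfolding trees_def by blast
  thus ?thesis using finite_EE[OF \<open>finite S\<close>] by (meson finite_Pow_iff finite_subset)
qed

lemma card_index:
  assumes "finite Ss" "\<And>S. S \<in> Ss \<Longrightarrow> finite S \<and> card S = r" "1 \<le> r"
  shows "card (Sigma Ss trees) \<le> card Ss * T r"
proof -
  have "card (Sigma Ss trees) = (\<Sum>S\<in>Ss. card (trees S))"
    by (rule card_SigmaI[OF assms(1)]) (use finite_trees' assms(2) in blast)
  also have "\<dots> \<le> (\<Sum>S\<in>Ss. T r)"
  proof (rule sum_mono)
    fix S assume "S \<in> Ss"
    hence "finite S" "card S = r" using assms(2) by auto
    thus "card (trees S) \<le> T r" using assms(3) by (rule trees_card_T)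
  qed
  also have "\<dots> = card Ss * T r" by simp
  finally show ?thesis .
qed

context setting begin

lemma term_pair:
  assumes S1: "S1 \<subseteq> {1..n}" "card S1 = r1" "1 \<le> r1" "F1 \<in> trees S1"
    and S2: "S2 \<subseteq> {1..n}" "card S2 = r2" "1 \<le> r2" "F2 \<in> trees S2"
    and dis: "S1 \<inter> S2 = {}"
  shows "Prob n p (\<lambda>G. F1 \<union> F2 \<subseteq> G \<and> G \<inter> (cross S1 ({1..n} - S1) \<union> cross S2 ({1..n} - S1 - S2)) = {})
     \<le> (hi / real n) ^ (r1 - 1) * (hi / real n) ^ (r2 - 1)
        * exp (- (lo / real n) * real (r1 * (n - r1) + r2 * (n - r1 - r2)))"
proof -
  define B1 where "B1 = cross S1 ({1..n} - S1)"
  define B2 where "B2 = cross S2 ({1..n} - S1 - S2)"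
  have F1E: "F1 \<subseteq> EE S1" using S1(4) unfolding trees_def by blast
  have F2E: "F2 \<subseteq> EE S2" using S2(4) unfolding trees_def by blast
  have AK: "F1 \<union> F2 \<subseteq> Kedges n" using F1E F2E EE_sub_K S1(1) S2(1) by blast
  have B1K: "B1 \<subseteq> Kedges n" unfolding B1_def using S1(1) by (intro cross_sub_K) auto
  have B2K: "B2 \<subseteq> Kedges n" unfolding B2_def using S2(1) dis by (intro cross_sub_K) auto
  have AB: "(F1 \<union> F2) \<inter> (B1 \<union> B2) = {}"
  proof (rule ccontr)
    assume "(F1 \<union> F2) \<inter> (B1 \<union> B2) \<noteq> {}"
    then obtain e where e: "e \<in> F1 \<union> F2" "e \<in> B1 \<union> B2" by blast
    have eS: "e \<subseteq> S1 \<or> e \<subseteq> S2" using e(1) F1E F2E EE_sub by blast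
    from e(2) show False
    proof
      assume "e \<in> B1"
      then obtain a b where "e = {a, b}" "a \<in> S1" "b \<notin> S1" unfolding B1_def cross_def by blast
      thus False using eS dis by blast
    next
      assume "e \<in> B2"
      then obtain a b where "e = {a, b}" "b \<notin> S1" "b \<notin> S2" unfolding B2_def cross_def by blast
      thus False using eS by blast
    qed
  qed
  have F12: "F1 \<inter> F2 = {}"
  proof (rule ccontr)
    assume "F1 \<inter> F2 \<noteq> {}"
    then obtain e where "e \<in> F1" "e \<in> F2" by blast
    hence "e \<subseteq> S1" "e \<subseteq> S2" "e \<noteq> {}" using F1E F2E EE_sub unfolding EE_def by blast+
    thus False using dis by blast
  qed
  have B12: "B1 \<inter> B2 = {}"
  proof (rule ccontr)
    assume "B1 \<inter> B2 \<noteq> {}"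
    then obtain e where "e \<in> B1" "e \<in> B2" by blast
    then obtain a b c d where "e = {a, b}" "a \<in> S1" "e = {c, d}" "c \<in> S2" "d \<notin> S1"
      unfolding B1_def B2_def cross_def by blast
    hence "a = c \<or> a = d" by blast
    thus False using dis \<open>a \<in> S1\<close> \<open>c \<in> S2\<close> \<open>d \<notin> S1\<close> by blast
  qed
  have fS1: "finite S1" using S1(1) finite_subset by blast
  have fS2: "finite S2" using S2(1) finite_subset by blast
  have fF1: "finite F1" using F1E finite_EE[OF fS1] finite_subset by blast
  have fF2: "finite F2" using F2E finite_EE[OF fS2] finite_subset by blast
  have cB1: "card B1 = r1 * (n - r1)" unfolding B1_def
    using card_cross[OF fS1, of "{1..n} - S1"] S1(1,2) by (simp add: card_Diff_subset fS1)
  have "{1..n} - S1 - S2 = {1..n} - (S1 \<union> S2)" by blast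
  moreover have "card (S1 \<union> S2) = r1 + r2" using dis fS1 fS2 S1(2) S2(2) by (simp add: card_Un_disjoint)
  moreover have "S1 \<union> S2 \<subseteq> {1..n}" using S1(1) S2(1) by blast
  ultimately have "card ({1..n} - S1 - S2) = n - r1 - r2"
    using fS1 fS2 by (simp add: card_Diff_subset)
  hence cB2: "card B2 = r2 * (n - r1 - r2)" unfolding B2_def
    using card_cross[OF fS2, of "{1..n} - S1 - S2"] S2(2) by simp
  have fB: "finite B1" "finite B2" unfolding B1_def B2_def
    using finite_cross fS1 fS2 by auto
  have cB: "card (B1 \<union> B2) = r1 * (n - r1) + r2 * (n - r1 - r2)"
    using card_Un_disjoint[OF fB B12] cB1 cB2 by simp
  have "Prob n p (\<lambda>G. F1 \<union> F2 \<subseteq> G \<and> G \<inter> (B1 \<union> B2) = {})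
      = (\<Prod>e\<in>F1 \<union> F2. p e) * (\<Prod>e\<in>B1 \<union> B2. 1 - p e)"
    using B1K B2K by (intro config_sum[OF p01 AK _ AB]) auto
  also have "(\<Prod>e\<in>F1 \<union> F2. p e) = (\<Prod>e\<in>F1. p e) * (\<Prod>e\<in>F2. p e)"
    using fF1 fF2 F12 by (simp add: prod.union_disjoint)
  also have "(\<Prod>e\<in>F1. p e) * (\<Prod>e\<in>F2. p e) * (\<Prod>e\<in>B1 \<union> B2. 1 - p e)
     \<le> (hi / real n) ^ (r1 - 1) * (hi / real n) ^ (r2 - 1)
        * exp (- (lo / real n) * real (r1 * (n - r1) + r2 * (n - r1 - r2)))"
  proof -
    have a: "(\<Prod>e\<in>F1. p e) \<le> (hi / real n) ^ (r1 - 1)" using tree_prod[OF S1(4,1,2,3)] .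
    have b: "(\<Prod>e\<in>F2. p e) \<le> (hi / real n) ^ (r2 - 1)" using tree_prod[OF S2(4,1,2,3)] .
    have "B1 \<union> B2 \<subseteq> Kedges n" using B1K B2K by blast
    hence c: "(\<Prod>e\<in>B1 \<union> B2. 1 - p e) \<le> exp (- (lo / real n) * real (r1 * (n - r1) + r2 * (n - r1 - r2)))"
      using cross_prod cB by metis
    have q0: "0 \<le> (hi / real n) ^ (r1 - 1)" using q01 by simp
    have p0: "0 \<le> (\<Prod>e\<in>F2. p e)" using AK p01 by (intro prod_nonneg) blast
    have b0: "0 \<le> (\<Prod>e\<in>B1 \<union> B2. 1 - p e)" using B1K B2K p01 by (intro prod_nonneg) force
    have ab: "(\<Prod>e\<in>F1. p e) * (\<Prod>e\<in>F2. p e) \<le> (hi / real n) ^ (r1 - 1) * (hi / real n) ^ (r2 - 1)"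
      by (rule mult_mono[OF a b q0 p0])
    have q1: "0 \<le> (hi / real n) ^ (r1 - 1) * (hi / real n) ^ (r2 - 1)" using q01 by simp
    show ?thesis by (rule mult_mono[OF ab c q1 b0])
  qed
  finally show ?thesis unfolding B1_def B2_def .
qed

end

context setting begin

lemma prob_pair:
  assumes i: "i \<in> {1..n}" and j: "j \<in> {1..n}" and r: "1 \<le> r1" "1 \<le> r2"
    and Pimp: "\<And>G. G \<subseteq> Kedges n \<Longrightarrow> P G \<Longrightarrow>
        card (comp G i) = r1 \<and> card (comp G j) = r2 \<and> comp G i \<noteq> comp G j"
  shows "Prob n p P \<le> real (card {S. S \<subseteq> {1..n} \<and> {i} \<subseteq> S \<and> card S = r1} * T r1)
     * real (card {S. S \<subseteq> {1..n} \<and> {j} \<subseteq> S \<and> card S = r2} * T r2)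
     * ((hi / real n) ^ (r1 - 1) * (hi / real n) ^ (r2 - 1)
        * exp (- (lo / real n) * real (r1 * (n - r1) + r2 * (n - r1 - r2))))"
proof -
  define Ss1 where "Ss1 = {S. S \<subseteq> {1..n} \<and> {i} \<subseteq> S \<and> card S = r1}"
  define Ss2 where "Ss2 = {S. S \<subseteq> {1..n} \<and> {j} \<subseteq> S \<and> card S = r2}"
  define I1 where "I1 = Sigma Ss1 trees"
  define I2 where "I2 = Sigma Ss2 trees"
  define I where "I = {x \<in> I1 \<times> I2. fst (fst x) \<inter> fst (snd x) = {}}"
  define M where "M = (hi / real n) ^ (r1 - 1) * (hi / real n) ^ (r2 - 1)
        * exp (- (lo / real n) * real (r1 * (n - r1) + r2 * (n - r1 - r2)))"
  have M0: "0 \<le> M" unfolding M_def using q01 by simp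
  have "Ss1 \<subseteq> Pow {1..n}" unfolding Ss1_def by blast
  hence fSs1: "finite Ss1" by (rule finite_subset) simp
  have "Ss2 \<subseteq> Pow {1..n}" unfolding Ss2_def by blast
  hence fSs2: "finite Ss2" by (rule finite_subset) simp
  have fS1: "S \<in> Ss1 \<Longrightarrow> finite S \<and> card S = r1" for S unfolding Ss1_def
    by (auto intro: finite_subset[OF _ finite_atLeastAtMost])
  have fS2: "S \<in> Ss2 \<Longrightarrow> finite S \<and> card S = r2" for S unfolding Ss2_def
    by (auto intro: finite_subset[OF _ finite_atLeastAtMost])
  have fI1: "finite I1" unfolding I1_def using fSs1 fS1 finite_trees' by (intro finite_SigmaI) blast+
  have fI2: "finite I2" unfolding I2_def using fSs2 fS2 finite_trees' by (intro finite_SigmaI) blast+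
  have fI: "finite I" unfolding I_def using fI1 fI2 by simp
  define Q where "Q = (\<lambda>((S1, F1), (S2, F2)) G. F1 \<union> F2 \<subseteq> G \<and>
       G \<inter> (cross S1 ({1..n} - S1) \<union> cross S2 ({1..n} - S1 - S2)) = {})"
  have "Prob n p P \<le> (\<Sum>k\<in>I. Prob n p (Q k))"
  proof (rule Prob_union_bound[OF p01 fI])
    fix G assume G: "G \<subseteq> Kedges n" "P G"
    define S1 where "S1 = comp G i"
    define S2 where "S2 = comp G j"
    obtain F1 where F1: "F1 \<in> trees S1" "F1 \<subseteq> G" using comp_facts(4)[OF G(1) i] unfolding S1_def by blast
    obtain F2 where F2: "F2 \<in> trees S2" "F2 \<subseteq> G" using comp_facts(4)[OF G(1) j] unfolding S2_def by blast
    have P': "card S1 = r1" "card S2 = r2" "S1 \<inter> S2 = {}"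
      using Pimp[OF G] comp_disjoint unfolding S1_def S2_def by auto
    have "S1 \<in> Ss1" unfolding Ss1_def S1_def using comp_facts(1,2)[OF G(1) i] P' unfolding S1_def by auto
    moreover have "S2 \<in> Ss2" unfolding Ss2_def S2_def using comp_facts(1,2)[OF G(1) j] P' unfolding S2_def by auto
    ultimately have "((S1, F1), (S2, F2)) \<in> I" unfolding I_def I1_def I2_def using F1 F2 P' by simp
    moreover have "Q ((S1, F1), (S2, F2)) G"
    proof -
      have a: "G \<inter> cross S1 ({1..n} - S1) = {}" using comp_facts(3)[OF G(1) i] unfolding S1_def .
      have b: "G \<inter> cross S2 ({1..n} - S2) = {}" using comp_facts(3)[OF G(1) j] unfolding S2_def .
      have "cross S2 ({1..n} - S1 - S2) \<subseteq> cross S2 ({1..n} - S2)" unfolding cross_def by blast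
      hence "F1 \<union> F2 \<subseteq> G \<and> G \<inter> (cross S1 ({1..n} - S1) \<union> cross S2 ({1..n} - S1 - S2)) = {}"
        using a b F1 F2 by blast
      thus ?thesis unfolding Q_def by simp
    qed
    ultimately show "\<exists>k\<in>I. Q k G" by blast
  qed
  also have "\<dots> \<le> (\<Sum>k\<in>I. M)"
  proof (rule sum_mono)
    fix k assume "k \<in> I"
    then obtain S1 F1 S2 F2 where k: "k = ((S1, F1), (S2, F2))" "S1 \<in> Ss1" "F1 \<in> trees S1"
      "S2 \<in> Ss2" "F2 \<in> trees S2" "S1 \<inter> S2 = {}" unfolding I_def I1_def I2_def by auto
    have s1: "S1 \<subseteq> {1..n}" "card S1 = r1" using k(2) unfolding Ss1_def by auto
    have s2: "S2 \<subseteq> {1..n}" "card S2 = r2" using k(4) unfolding Ss2_def by auto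
    have "Prob n p (\<lambda>G. F1 \<union> F2 \<subseteq> G \<and> G \<inter> (cross S1 ({1..n} - S1) \<union> cross S2 ({1..n} - S1 - S2)) = {}) \<le> M"
      unfolding M_def by (rule term_pair[OF s1 r(1) k(3) s2 r(2) k(5) k(6)])
    thus "Prob n p (Q k) \<le> M" unfolding k(1) Q_def by simp
  qed
  also have "\<dots> = real (card I) * M" by simp
  also have "\<dots> \<le> real (card Ss1 * T r1) * real (card Ss2 * T r2) * M"
  proof -
    have "card I \<le> card (I1 \<times> I2)" unfolding I_def using fI1 fI2 by (intro card_mono) auto
    also have "\<dots> = card I1 * card I2" by (simp add: card_cartesian_product)
    also have "\<dots> \<le> (card Ss1 * T r1) * (card Ss2 * T r2)"
      unfolding I1_def I2_def
      by (intro mult_mono card_index[OF fSs1] card_index[OF fSs2]) (use fS1 fS2 r in auto)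
    finally have "real (card I) \<le> real ((card Ss1 * T r1) * (card Ss2 * T r2))" by (simp only: of_nat_le_iff)
    hence "real (card I) \<le> real (card Ss1 * T r1) * real (card Ss2 * T r2)" by simp
    thus ?thesis using M0 by (intro mult_right_mono)
  qed
  finally show ?thesis unfolding Ss1_def Ss2_def M_def .
qed

end

lemma KEY:
  fixes C a \<omega> s y :: real and r :: nat
  assumes C: "C > 0" and a: "0 \<le> a" "a * (1 / C + 1) \<le> \<omega>" "a \<le> C"
    and r: "1 \<le> r" and s: "s \<le> 1" and y: "y \<ge> s * real r"
  shows "(C + a) ^ (r - 1) * exp (- (C - a) * y)
       \<le> (1 / C) * exp (- real r) * exp (- (C - 1 - ln C - C * (1 - s) - \<omega>) * real r)"
proof -
  have "(C + a) ^ (r - 1) = C ^ (r - 1) * (1 + a / C) ^ (r - 1)"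
    using C by (simp add: power_mult_distrib[symmetric] field_simps)
  also have "(1 + a / C) ^ (r - 1) \<le> exp (a / C) ^ (r - 1)"
    using C a by (intro power_mono) (auto simp: exp_ge_add_one_self)
  also have "exp (a / C) ^ (r - 1) = exp (a / C * real (r - 1))"
    by (simp add: exp_of_nat_mult[symmetric] mult.commute)
  also have "\<dots> \<le> exp (a / C * real r)" using C a by (intro exp_mono mult_left_mono) auto
  finally have 1: "(C + a) ^ (r - 1) \<le> C ^ (r - 1) * exp (a / C * real r)"
    using C by (simp add: mult_left_mono)
  have 2: "exp (- (C - a) * y) \<le> exp (- (C - a) * (s * real r))"
  proof -
    have "(C - a) * (s * real r) \<le> (C - a) * y" using a y by (intro mult_left_mono) auto
    hence "- (C - a) * y \<le> - (C - a) * (s * real r)" by linarith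
    thus ?thesis by (rule exp_mono)
  qed
  have "(C + a) ^ (r - 1) * exp (- (C - a) * y)
      \<le> C ^ (r - 1) * exp (a / C * real r) * exp (- (C - a) * (s * real r))"
    using 1 2 C by (intro mult_mono) auto
  also have "\<dots> = C ^ (r - 1) * exp (a / C * real r - (C - a) * (s * real r))"
  proof -
    have "- (C - a) * (s * real r) = - ((C - a) * (s * real r))" by (simp add: algebra_simps)
    hence "exp (- (C - a) * (s * real r)) = inverse (exp ((C - a) * (s * real r)))"
      by (simp only: exp_minus)
    thus ?thesis by (simp add: exp_diff divide_inverse mult.assoc)
  qed
  also have "\<dots> \<le> C ^ (r - 1) * exp ((- C * s + \<omega>) * real r)"
  proof -
    have "a * s \<le> a" using a s by (simp add: mult_left_le)
    moreover have "a * (1 / C + 1) = a / C + a" by (simp add: distrib_left)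
    ultimately have as: "a / C + a * s \<le> \<omega>" using a(2) by linarith
    have "(a / C + a * s) * real r \<le> \<omega> * real r" using as by (rule mult_right_mono) simp
    moreover have "a / C * real r - (C - a) * (s * real r) = (a / C + a * s) * real r - C * s * real r"
      by (simp add: algebra_simps)
    moreover have "(- C * s + \<omega>) * real r = \<omega> * real r - C * s * real r" by (simp add: algebra_simps)
    ultimately have "a / C * real r - (C - a) * (s * real r) \<le> (- C * s + \<omega>) * real r" by linarith
    thus ?thesis using C by (intro mult_left_mono) auto
  qed
  also have "\<dots> = (1 / C) * exp (- real r) * exp (- (C - 1 - ln C - C * (1 - s) - \<omega>) * real r)"
  proof -
    have "C ^ (r - 1) = C ^ r / C" using C r by (simp add: power_eq_if)
    also have "C ^ r = exp (ln C * real r)"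
    proof -
      have "exp (real r * ln C) = exp (ln C) ^ r" by (rule exp_of_nat_mult)
      thus ?thesis using C by (simp add: mult.commute)
    qed
    finally have "C ^ (r - 1) = exp (ln C * real r) / C" .
    moreover have "exp (ln C * real r) * exp ((- C * s + \<omega>) * real r)
       = exp (- real r) * exp (- (C - 1 - ln C - C * (1 - s) - \<omega>) * real r)"
      by (simp add: exp_add[symmetric] algebra_simps)
    ultimately show ?thesis by (simp add: field_simps)
  qed
  finally show ?thesis .
qed

lemma choose_bound:
  assumes "1 \<le> n" 
  shows "real ((n - k) choose (r - k)) \<le> real n ^ (r - k) / fact (r - k)"
proof -
  have "((n - k) choose (r - k)) * fact (r - k) \<le> (n - k) ^ (r - k)" by (rule binomial_fact_pow)
  also have "\<dots> \<le> n ^ (r - k)" by (simp add: power_mono)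
  finally have "real (((n - k) choose (r - k)) * fact (r - k)) \<le> real (n ^ (r - k))" by (simp only: of_nat_le_iff)
  hence "real ((n - k) choose (r - k)) * fact (r - k) \<le> real n ^ (r - k)" by simp
  thus ?thesis by (simp add: field_simps)
qed

lemma factor_bound:
  fixes C a \<omega> s y ch T \<kappa> n :: real and r :: nat
  assumes C: "C > 0" and a: "0 \<le> a" "a * (1 / C + 1) \<le> \<omega>" "a \<le> C"
    and r: "1 \<le> r" and s: "s \<le> 1" and y: "y \<ge> s * real r"
    and T: "0 \<le> T" and ch: "ch * ((C + a) / n) ^ (r - 1) \<le> \<kappa> * (C + a) ^ (r - 1) / fact (r - 1)"
    and k: "0 \<le> \<kappa>"
  shows "T * (ch * ((C + a) / n) ^ (r - 1)) * exp (- (C - a) * y)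
     \<le> \<kappa> * ((1 / C) * (T * exp (- real r) / fact (r - 1)) * exp (- (C - 1 - ln C - C * (1 - s) - \<omega>) * real r))"
proof -
  have "T * (ch * ((C + a) / n) ^ (r - 1)) * exp (- (C - a) * y)
      \<le> T * (\<kappa> * (C + a) ^ (r - 1) / fact (r - 1)) * exp (- (C - a) * y)"
    using ch T by (intro mult_right_mono mult_left_mono) auto
  also have "\<dots> = (\<kappa> * T / fact (r - 1)) * ((C + a) ^ (r - 1) * exp (- (C - a) * y))"
    by (simp add: field_simps)
  also have "\<dots> \<le> (\<kappa> * T / fact (r - 1)) * ((1 / C) * exp (- real r) * exp (- (C - 1 - ln C - C * (1 - s) - \<omega>) * real r))"
    using KEY[OF C a r s y] T k by (intro mult_left_mono) auto
  also have "\<dots> = \<kappa> * ((1 / C) * (T * exp (- real r) / fact (r - 1)) * exp (- (C - 1 - ln C - C * (1 - s) - \<omega>) * real r))"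
    by (simp add: field_simps)
  finally show ?thesis .
qed

lemma CB1:
  fixes h :: real and n r :: nat
  assumes n: "1 \<le> n" and r: "1 \<le> r" and h: "0 \<le> h"
  shows "real ((n - 1) choose (r - 1)) * (h / real n) ^ (r - 1) \<le> 1 * h ^ (r - 1) / fact (r - 1)"
proof -
  have "real ((n - 1) choose (r - 1)) * (h / real n) ^ (r - 1)
      \<le> real n ^ (r - 1) / fact (r - 1) * (h / real n) ^ (r - 1)"
    using choose_bound[OF n, of 1 r] h by (intro mult_right_mono) auto
  also have "\<dots> = h ^ (r - 1) / fact (r - 1)" using n by (simp add: power_divide field_simps)
  finally show ?thesis by simp
qed

lemma CB2:
  fixes h eps :: real and n r :: nat
  assumes n: "1 \<le> n" and r: "2 \<le> r" and h: "0 \<le> h" and re: "real r \<le> eps * real n"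
  shows "real ((n - 2) choose (r - 2)) * (h / real n) ^ (r - 1) \<le> eps * h ^ (r - 1) / fact (r - 1)"
proof -
  obtain m where m: "r = m + 2" using r by (metis add.commute le_Suc_ex)
  have rm: "r - 1 = Suc m" "r - 2 = m" using m by auto
  have "real ((n - 2) choose (r - 2)) * (h / real n) ^ (r - 1)
      \<le> real n ^ m / fact m * (h / real n) ^ Suc m"
    unfolding rm using choose_bound[OF n, of 2 r] h rm by (intro mult_right_mono) auto
  also have "\<dots> = h ^ Suc m / (real n * fact m)"
    using n by (simp add: power_divide field_simps)
  also have "\<dots> = (real (Suc m) / real n) * (h ^ Suc m / fact (Suc m))"
  proof -
    have "fact (Suc m) = real (Suc m) * fact m" by (simp add: fact_Suc)
    moreover have "real (Suc m) > 0" "real n > 0" "(fact m :: real) > 0" using n by auto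
    moreover have "\<And>S N F x :: real. S > 0 \<Longrightarrow> N > 0 \<Longrightarrow> F > 0 \<Longrightarrow> (S / N) * (x / (S * F)) = x / (N * F)"
      by (simp add: field_simps)
    ultimately show ?thesis by metis
  qed
  also have "\<dots> \<le> eps * (h ^ Suc m / fact (Suc m))"
  proof (rule mult_right_mono)
    have "real (Suc m) \<le> eps * real n" using re m by simp
    thus "real (Suc m) / real n \<le> eps" using n by (simp add: divide_le_eq mult.commute)
    show "0 \<le> h ^ Suc m / fact (Suc m)" using h by simp
  qed
  finally show ?thesis using rm by simp
qed

theorem lemma2:
  fixes C eps \<omega> :: real
    and \<alpha> :: "nat \<Rightarrow> real"
    and p :: "nat \<Rightarrow> nat set \<Rightarrow> real"
  assumes C_pos: "C > 0" and C_ne1: "C \<noteq> 1"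
    and alpha_nonneg: "\<And>n. \<alpha> n \<ge> 0"
    and alpha_lim: "\<alpha> \<longlonglongrightarrow> 0"
    and p_prob: "\<And>n e. e \<in> Kedges n \<Longrightarrow> 0 \<le> p n e \<and> p n e \<le> 1"
    and p_bounds: "\<And>n e. e \<in> Kedges n \<Longrightarrow>
                      (C - \<alpha> n) / real n \<le> p n e \<and> p n e \<le> (C + \<alpha> n) / real n"
    and eps: "0 < eps" "eps < 1" and om: "\<omega> > 0"
    and d0: "delta C - C * eps - \<omega> > 0"
    and d1: "delta C - 2 * C * eps - \<omega> > 0"
  shows "\<exists>N::nat.
     (\<forall>n\<ge>N. \<forall>i\<in>{1..n}. \<forall>j\<in>{1..n}. \<forall>r1 r2::nat. i \<noteq> j \<longrightarrow>
        1 \<le> r1 \<longrightarrow> real r1 \<le> eps * real n \<longrightarrow> 1 \<le> r2 \<longrightarrow> real r2 \<le> eps * real n \<longrightarrow>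
        Prob n (p n) (\<lambda>G. card (comp G i) = r1 \<and> card (comp G j) = r2 \<and> comp G i \<noteq> comp G j)
        \<le> (1 / C) * (real (T r1) * exp (- real r1) / fact (r1 - 1))
              * exp (- (delta C - 2 * C * eps - \<omega>) * real r1)
          * ((1 / C) * (real (T r2) * exp (- real r2) / fact (r2 - 1))
              * exp (- (delta C - 2 * C * eps - \<omega>) * real r2))) \<and>
     (\<forall>n\<ge>N. \<forall>i\<in>{1..n}. \<forall>j\<in>{1..n}. \<forall>r1::nat. i \<noteq> j \<longrightarrow>
        2 \<le> r1 \<longrightarrow> real r1 \<le> eps * real n \<longrightarrow>
        Prob n (p n) (\<lambda>G. card (comp G i) = r1 \<and> comp G i = comp G j)
        \<le> 2 * eps * ((1 / C) * (real (T r1) * exp (- real r1) / fact (r1 - 1))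
              * exp (- (delta C - C * eps - \<omega>) * real r1)))"
proof -
  define \<eta> where "\<eta> = min C (\<omega> / (1 / C + 1))"
  have "0 < 1 / C" using C_pos by simp
  hence "1 / C + 1 > 0" by linarith
  hence \<eta>: "\<eta> > 0" using C_pos om by (simp add: \<eta>_def)
  have ev1: "eventually (\<lambda>n. \<alpha> n < \<eta>) sequentially" using order_tendstoD(2)[OF alpha_lim \<eta>] .
  obtain N0 :: nat where N0: "2 * C + 1 \<le> real N0" using real_arch_simple by blast
  have ev2: "eventually (\<lambda>n. N0 \<le> n) sequentially" by (rule eventually_ge_at_top)
  obtain N where N: "\<And>n. n \<ge> N \<Longrightarrow> \<alpha> n < \<eta> \<and> N0 \<le> n"
    using eventually_conj[OF ev1 ev2] unfolding eventually_sequentially by blast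
  have good: "\<alpha> n \<le> C \<and> \<alpha> n * (1 / C + 1) \<le> \<omega> \<and> 1 \<le> n \<and> 0 \<le> (C + \<alpha> n) / real n
      \<and> (C + \<alpha> n) / real n \<le> 1" if n: "n \<ge> N" for n
  proof -
    have a: "\<alpha> n < \<eta>" "N0 \<le> n" using N[OF n] by auto
    have aC: "\<alpha> n \<le> C" using a \<eta>_def by simp
    have "\<alpha> n \<le> \<omega> / (1 / C + 1)" using a \<eta>_def by simp
    moreover have "1 / C + 1 > 0" using \<open>1 / C + 1 > 0\<close> .
    ultimately have aw: "\<alpha> n * (1 / C + 1) \<le> \<omega>" by (simp add: le_divide_eq)
    have nr: "2 * C + 1 \<le> real n" using N0 a(2) by (meson of_nat_le_iff order_trans)
    hence n1: "1 \<le> n" using C_pos by simp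
    have "C + \<alpha> n \<le> real n" using nr aC by linarith
    hence "(C + \<alpha> n) / real n \<le> 1" using n1 by simp
    moreover have "0 \<le> (C + \<alpha> n) / real n" using C_pos alpha_nonneg[of n] by simp
    ultimately show ?thesis using aC aw n1 by simp
  qed
  have sett: "setting n (p n) (C - \<alpha> n) (C + \<alpha> n)" if n: "n \<ge> N" for n
    using good[OF n] p_prob p_bounds by unfold_locales auto
  show ?thesis
  proof (intro exI[of _ N] conjI allI impI ballI)
    fix n i j r1 r2 :: nat
    assume n: "N \<le> n" and i: "i \<in> {1..n}" and j: "j \<in> {1..n}" and ij: "i \<noteq> j"
      and r1: "1 \<le> r1" "real r1 \<le> eps * real n" and r2: "1 \<le> r2" "real r2 \<le> eps * real n"
    interpret S: setting n "p n" "C - \<alpha> n" "C + \<alpha> n" using sett[OF n] .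
    have g: "\<alpha> n \<le> C" "\<alpha> n * (1 / C + 1) \<le> \<omega>" "1 \<le> n" "0 \<le> (C + \<alpha> n) / real n"
      using good[OF n] by auto
    define a where "a = \<alpha> n"
    define q where "q = (C + a) / real n"
    have a0: "0 \<le> a" unfolding a_def by (rule alpha_nonneg)
    have npos: "real n > 0" using g by simp
    have pp: "Prob n (p n) (\<lambda>G. card (comp G i) = r1 \<and> card (comp G j) = r2 \<and> comp G i \<noteq> comp G j)
      \<le> real (card {S. S \<subseteq> {1..n} \<and> {i} \<subseteq> S \<and> card S = r1} * T r1)
     * real (card {S. S \<subseteq> {1..n} \<and> {j} \<subseteq> S \<and> card S = r2} * T r2)
     * (((C + \<alpha> n) / real n) ^ (r1 - 1) * ((C + \<alpha> n) / real n) ^ (r2 - 1)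
        * exp (- ((C - \<alpha> n) / real n) * real (r1 * (n - r1) + r2 * (n - r1 - r2))))"
      by (rule S.prob_pair[OF i j r1(1) r2(1)]) auto
    have c1: "card {S. S \<subseteq> {1..n} \<and> {i} \<subseteq> S \<and> card S = r1} = (n - 1) choose (r1 - 1)"
      using card_supsets[of "{1..n}" "{i}" 1 r1] i r1 by simp
    have c2: "card {S. S \<subseteq> {1..n} \<and> {j} \<subseteq> S \<and> card S = r2} = (n - 1) choose (r2 - 1)"
      using card_supsets[of "{1..n}" "{j}" 1 r2] j r2 by simp
    define y1 where "y1 = real (r1 * (n - r1)) / real n"
    define y2 where "y2 = real (r2 * (n - r1 - r2)) / real n"
    have ex: "exp (- ((C - a) / real n) * real (r1 * (n - r1) + r2 * (n - r1 - r2)))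
        = exp (- (C - a) * y1) * exp (- (C - a) * y2)"
    proof -
      have "- ((C - a) / real n) * real (r1 * (n - r1) + r2 * (n - r1 - r2)) = - (C - a) * y1 + - (C - a) * y2"
        unfolding y1_def y2_def using npos by (simp add: field_simps)
      thus ?thesis by (simp add: exp_add)
    qed
    define F1 where "F1 = real (T r1) * (real ((n - 1) choose (r1 - 1)) * q ^ (r1 - 1)) * exp (- (C - a) * y1)"
    define F2 where "F2 = real (T r2) * (real ((n - 1) choose (r2 - 1)) * q ^ (r2 - 1)) * exp (- (C - a) * y2)"
    have split: "Prob n (p n) (\<lambda>G. card (comp G i) = r1 \<and> card (comp G j) = r2 \<and> comp G i \<noteq> comp G j) \<le> F1 * F2"
    proof -
      have "real (((n - 1) choose (r1 - 1)) * T r1) * real (((n - 1) choose (r2 - 1)) * T r2) * (q ^ (r1 - 1) * q ^ (r2 - 1)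
        * (exp (- (C - a) * y1) * exp (- (C - a) * y2))) = F1 * F2"
        unfolding F1_def F2_def by (simp add: ac_simps)
      thus ?thesis using pp unfolding c1 c2 ex[symmetric] by (simp add: a_def q_def)
    qed
    have s1: "1 - 2 * eps \<le> 1" using eps by simp
    have y1b: "y1 \<ge> (1 - 2 * eps) * real r1"
    proof -
      have rn: "r1 \<le> n" using r1(2) eps npos
        by (metis le_less_trans less_imp_le_nat linorder_not_le mult_less_cancel_right2 of_nat_less_iff)
      have "real (r1 * (n - r1)) = real r1 * (real n - real r1)" using rn by (simp add: of_nat_diff)
      also have "\<dots> \<ge> real r1 * (real n - eps * real n)" using r1 by (intro mult_left_mono) auto
      finally have "real (r1 * (n - r1)) \<ge> ((1 - eps) * real r1) * real n" by (simp add: algebra_simps)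
      hence "y1 \<ge> (1 - eps) * real r1" unfolding y1_def using npos by (simp add: le_divide_eq)
      moreover have "(1 - eps) * real r1 \<ge> (1 - 2 * eps) * real r1" using eps by (intro mult_right_mono) auto
      ultimately show ?thesis by linarith
    qed
    have y2b: "y2 \<ge> (1 - 2 * eps) * real r2"
    proof -
      have "real (n - r1 - r2) \<ge> real n - real r1 - real r2"
        by (cases "r1 + r2 \<le> n") (auto simp: of_nat_diff)
      hence A: "real r2 * (real n - real r1 - real r2) \<le> real (r2 * (n - r1 - r2))"
        by (simp add: mult_left_mono)
      have B: "real r2 * (real n - eps * real n - eps * real n) \<le> real r2 * (real n - real r1 - real r2)"
        using r1 r2 by (intro mult_left_mono) auto
      have "real r2 * (real n - eps * real n - eps * real n) \<le> real (r2 * (n - r1 - r2))"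
        using A B by linarith
      hence "real (r2 * (n - r1 - r2)) \<ge> ((1 - 2 * eps) * real r2) * real n" by (simp add: algebra_simps)
      thus ?thesis unfolding y2_def using npos by (simp add: le_divide_eq)
    qed
    have F1b: "F1 \<le> 1 * ((1 / C) * (real (T r1) * exp (- real r1) / fact (r1 - 1))
        * exp (- (C - 1 - ln C - C * (1 - (1 - 2 * eps)) - \<omega>) * real r1))"
      unfolding F1_def q_def
      by (rule factor_bound[OF C_pos a0 g(2)[folded a_def] g(1)[folded a_def] r1(1) s1 y1b _ CB1[OF g(3) r1(1)]])
         (use C_pos a0 in auto)
    have F2b: "F2 \<le> 1 * ((1 / C) * (real (T r2) * exp (- real r2) / fact (r2 - 1))
        * exp (- (C - 1 - ln C - C * (1 - (1 - 2 * eps)) - \<omega>) * real r2))"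
      unfolding F2_def q_def
      by (rule factor_bound[OF C_pos a0 g(2)[folded a_def] g(1)[folded a_def] r2(1) s1 y2b _ CB1[OF g(3) r2(1)]])
         (use C_pos a0 in auto)
    have eqd: "C - 1 - ln C - C * (1 - (1 - 2 * eps)) - \<omega> = delta C - 2 * C * eps - \<omega>"
      by (simp add: delta_def algebra_simps)
    have F2pos: "0 \<le> F2" unfolding F2_def q_def using C_pos a0 by simp
    have G1pos: "0 \<le> (1 / C) * (real (T r1) * exp (- real r1) / fact (r1 - 1))
        * exp (- (delta C - 2 * C * eps - \<omega>) * real r1)" using C_pos by simp
    have "F1 * F2 \<le> ((1 / C) * (real (T r1) * exp (- real r1) / fact (r1 - 1))
        * exp (- (delta C - 2 * C * eps - \<omega>) * real r1))
        * ((1 / C) * (real (T r2) * exp (- real r2) / fact (r2 - 1))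
        * exp (- (delta C - 2 * C * eps - \<omega>) * real r2))"
      using F1b F2b unfolding eqd by (intro mult_mono G1pos F2pos) auto
    with split show "Prob n (p n) (\<lambda>G. card (comp G i) = r1 \<and> card (comp G j) = r2 \<and> comp G i \<noteq> comp G j)
        \<le> (1 / C) * (real (T r1) * exp (- real r1) / fact (r1 - 1))
              * exp (- (delta C - 2 * C * eps - \<omega>) * real r1)
          * ((1 / C) * (real (T r2) * exp (- real r2) / fact (r2 - 1))
              * exp (- (delta C - 2 * C * eps - \<omega>) * real r2))" by linarith
  next
    fix n i j r1 :: nat
    assume n: "N \<le> n" and i: "i \<in> {1..n}" and j: "j \<in> {1..n}" and ij: "i \<noteq> j"
      and r1: "2 \<le> r1" "real r1 \<le> eps * real n"
    interpret S: setting n "p n" "C - \<alpha> n" "C + \<alpha> n" using sett[OF n] .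
    have g: "\<alpha> n \<le> C" "\<alpha> n * (1 / C + 1) \<le> \<omega>" "1 \<le> n" "0 \<le> (C + \<alpha> n) / real n"
      using good[OF n] by auto
    define a where "a = \<alpha> n"
    define q where "q = (C + a) / real n"
    have a0: "0 \<le> a" unfolding a_def by (rule alpha_nonneg)
    have npos: "real n > 0" using g by simp
    have r11: "1 \<le> r1" using r1 by simp
    have pp: "Prob n (p n) (\<lambda>G. card (comp G i) = r1 \<and> comp G i = comp G j)
      \<le> real (card {S. S \<subseteq> {1..n} \<and> {i, j} \<subseteq> S \<and> card S = r1}) * real (T r1)
     * (((C + \<alpha> n) / real n) ^ (r1 - 1) * exp (- ((C - \<alpha> n) / real n) * real (r1 * (n - r1))))"
    proof (rule S.prob_single[OF i r11])
      fix G assume G: "G \<subseteq> Kedges n" "card (comp G i) = r1 \<and> comp G i = comp G j"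
      thus "card (comp G i) = r1 \<and> j \<in> comp G i" using comp_facts(2)[OF G(1) j] by metis
    qed
    have c1: "card {S. S \<subseteq> {1..n} \<and> {i, j} \<subseteq> S \<and> card S = r1} = (n - 2) choose (r1 - 2)"
      using card_supsets[of "{1..n}" "{i, j}" 2 r1] i j ij r1 by simp
    define y where "y = real (r1 * (n - r1)) / real n"
    have ex: "exp (- ((C - a) / real n) * real (r1 * (n - r1))) = exp (- (C - a) * y)"
    proof -
      have "- ((C - a) / real n) * real (r1 * (n - r1)) = - (C - a) * y"
        unfolding y_def by (simp add: divide_inverse algebra_simps)
      thus ?thesis by simp
    qed
    define F where "F = real (T r1) * (real ((n - 2) choose (r1 - 2)) * q ^ (r1 - 1)) * exp (- (C - a) * y)"
    have split: "Prob n (p n) (\<lambda>G. card (comp G i) = r1 \<and> comp G i = comp G j) \<le> F"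
      using pp unfolding c1 F_def ex[unfolded a_def, symmetric] q_def a_def by (simp add: ac_simps)
    have s1: "1 - eps \<le> 1" using eps by simp
    have yb: "y \<ge> (1 - eps) * real r1"
    proof -
      have rn: "r1 \<le> n" using r1(2) eps npos
        by (metis le_less_trans less_imp_le_nat linorder_not_le mult_less_cancel_right2 of_nat_less_iff)
      have "real (r1 * (n - r1)) = real r1 * (real n - real r1)" using rn by (simp add: of_nat_diff)
      also have "\<dots> \<ge> real r1 * (real n - eps * real n)" using r1 by (intro mult_left_mono) auto
      finally have "real (r1 * (n - r1)) \<ge> ((1 - eps) * real r1) * real n" by (simp add: algebra_simps)
      thus ?thesis unfolding y_def using npos by (simp add: le_divide_eq)
    qed
    have Fb: "F \<le> eps * ((1 / C) * (real (T r1) * exp (- real r1) / fact (r1 - 1))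
        * exp (- (C - 1 - ln C - C * (1 - (1 - eps)) - \<omega>) * real r1))"
      unfolding F_def q_def
      by (rule factor_bound[OF C_pos a0 g(2)[folded a_def] g(1)[folded a_def] r11 s1 yb _ CB2[OF g(3) r1(1) _ r1(2)]])
         (use C_pos a0 eps in auto)
    have eqd: "C - 1 - ln C - C * (1 - (1 - eps)) - \<omega> = delta C - C * eps - \<omega>"
      by (simp add: delta_def algebra_simps)
    have G1pos: "0 \<le> (1 / C) * (real (T r1) * exp (- real r1) / fact (r1 - 1))
        * exp (- (delta C - C * eps - \<omega>) * real r1)" using C_pos by simp
    have "eps * ((1 / C) * (real (T r1) * exp (- real r1) / fact (r1 - 1))
        * exp (- (delta C - C * eps - \<omega>) * real r1)) \<le> 2 * eps * ((1 / C) * (real (T r1) * exp (- real r1) / fact (r1 - 1))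
        * exp (- (delta C - C * eps - \<omega>) * real r1))"
      using G1pos eps by (intro mult_right_mono) auto
    then show "Prob n (p n) (\<lambda>G. card (comp G i) = r1 \<and> comp G i = comp G j)
        \<le> 2 * eps * ((1 / C) * (real (T r1) * exp (- real r1) / fact (r1 - 1))
              * exp (- (delta C - C * eps - \<omega>) * real r1))"
      by (rule order_trans[OF split order_trans[OF Fb[unfolded eqd]]])
  qed
qed

end
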